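(* Let $\mathcal{G}=(V,E_1,\dots,E_T)$ be an always connected broadcast network with $n=|V|$ vertices, and let $\delta=\min_{v\in V}\Delta(v)$. Then $\mathcal{G}$ can be explored in $(\delta+1)(2n-3)$ timesteps, i.e. there is a temporal walk exploring $\mathcal{G}$ of length at most $(\delta+1)(2n-3)$.
   Context: A directed temporal graph $\mathcal{G}=(V,E_1,\dots,E_T)$ consists of a finite vertex set $V$ and an ordered sequence of sets $E_1,\dots,E_T$ of directed edges on $V$ (timesteps); $T$ is the lifetime; an edge $e$ is active at $t$ if $e\in E_t$; the underlying graph is $U(\mathcal{G})=(V,\bigcup_t E_t)$, assumed symmetric. $N(v)=\{u:(v,u)$ is an edge of $U(\mathcal{G})\}$ and $\Delta(v)=|N(v)|$. Write $[i,j]=\{i,\dots,j\}$. Such a $\mathcal{G}$ is a broadcast network if: (1) for every $v\in V$ and $t$, either all out-edges $\{(v,u):u\in N(v)\}$ belong to $E_t$ or none does; say $v$ is active at $t$ in the former case; (2) for all $t_1<t_2$, $v$ can be active at both $t_1$ and $t_2$ only if every $u\in N(v)$ is active at some timestep in $[t_1,t_2-1]$. It is always connected if each static graph $(V,E_t)$, $t\in[1,T]$, is connected. A temporal walk is a sequence $((v_{i_1},v_{i_2}),t_1),\dots,((v_{i_{m-1}},v_{i_m}),t_{m-1})$ of directed edges traversed in their orientation forming a walk in $U(\mathcal{G})$, each edge $(v_{i_j},v_{i_{j+1}})$ active at timestep $t_j$, with $t_1<\dots<t_{m-1}$; its length is $t_{m-1}$; it explores $\mathcal{G}$ if every vertex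 belongs to some edge of the walk. *)

theory Defs
  imports Main
begin

text \<open>A directed temporal graph is given by a vertex set V, a lifetime T and
  edge sets E t for the timesteps t in {1..T} (values of E outside {1..T} are irrelevant).\<close>

definition underlying_edges :: "nat \<Rightarrow> (nat \<Rightarrow> ('a \<times> 'a) set) \<Rightarrow> ('a \<times> 'a) set" where
  "underlying_edges T E = (\<Union>t\<in>{1..T}. E t)"

definition temporal_graph :: "'a set \<Rightarrow> nat \<Rightarrow> (nat \<Rightarrow> ('a \<times> 'a) set) \<Rightarrow> bool" where
  "temporal_graph V T E \<longleftrightarrow> finite V \<and> (\<forall>t\<in>{1..T}. E t \<subseteq> V \<times> V \<and> (\<forall>v. (v, v) \<notin> E t))
     \<and> sym (underlying_edges T E)"

definition nbrs :: "nat \<Rightarrow> (nat \<Rightarrow> ('a \<times> 'a) set) \<Rightarrow> 'a \<Rightarrow> 'a set" where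
  "nbrs T E v = {u. (v, u) \<in> underlying_edges T E}"

definition active :: "nat \<Rightarrow> (nat \<Rightarrow> ('a \<times> 'a) set) \<Rightarrow> 'a \<Rightarrow> nat \<Rightarrow> bool" where
  "active T E v t \<longleftrightarrow> (\<forall>u\<in>nbrs T E v. (v, u) \<in> E t)"

definition broadcast_network :: "'a set \<Rightarrow> nat \<Rightarrow> (nat \<Rightarrow> ('a \<times> 'a) set) \<Rightarrow> bool" where
  "broadcast_network V T E \<longleftrightarrow> temporal_graph V T E \<and>
     (\<forall>v\<in>V. \<forall>t\<in>{1..T}. (\<forall>u\<in>nbrs T E v. (v, u) \<in> E t) \<or> (\<forall>u\<in>nbrs T E v. (v, u) \<notin> E t)) \<and>
     (\<forall>v\<in>V. \<forall>t1\<in>{1..T}. \<forall>t2\<in>{1..T}. t1 < t2 \<and> active T E v t1 \<and> active T E v t2 \<longrightarrow>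
        (\<forall>u\<in>nbrs T E v. \<exists>t\<in>{t1..t2-1}. active T E u t))"

definition static_connected :: "'a set \<Rightarrow> ('a \<times> 'a) set \<Rightarrow> bool" where
  "static_connected V A \<longleftrightarrow> (\<forall>u\<in>V. \<forall>v\<in>V. (u, v) \<in> (A \<union> A\<inverse>)\<^sup>*)"

definition always_connected :: "'a set \<Rightarrow> nat \<Rightarrow> (nat \<Rightarrow> ('a \<times> 'a) set) \<Rightarrow> bool" where
  "always_connected V T E \<longleftrightarrow> (\<forall>t\<in>{1..T}. static_connected V (E t))"

definition temporal_walk :: "nat \<Rightarrow> (nat \<Rightarrow> ('a \<times> 'a) set) \<Rightarrow> (('a \<times> 'a) \<times> nat) list \<Rightarrow> bool" where
  "temporal_walk T E W \<longleftrightarrow> W \<noteq> [] \<and>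
     (\<forall>i<length W. snd (W ! i) \<in> {1..T} \<and> fst (W ! i) \<in> E (snd (W ! i))) \<and>
     (\<forall>i. Suc i < length W \<longrightarrow> snd (fst (W ! i)) = fst (fst (W ! Suc i)) \<and> snd (W ! i) < snd (W ! Suc i))"

definition walk_length :: "(('a \<times> 'a) \<times> nat) list \<Rightarrow> nat" where
  "walk_length W = snd (last W)"

definition explores :: "'a set \<Rightarrow> (('a \<times> 'a) \<times> nat) list \<Rightarrow> bool" where
  "explores V W \<longleftrightarrow> (\<forall>v\<in>V. \<exists>e\<in>set W. v = fst (fst e) \<or> v = snd (fst e))"

end

theory Submission
  imports Defs
begin

fun cnt :: "nat \<Rightarrow> (nat \<Rightarrow> ('a \<times> 'a) set) \<Rightarrow> 'a \<Rightarrow> nat \<Rightarrow> nat" where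
  "cnt T E v 0 = 0"
| "cnt T E v (Suc s) = cnt T E v s + (if active T E v (Suc s) then 1 else 0)"

lemma cnt_mono: "s \<le> s' \<Longrightarrow> cnt T E v s \<le> cnt T E v s'"
  by (induction s') (auto simp: le_Suc_eq)

lemma cnt_active': "active T E v t \<Longrightarrow> 1 \<le> t \<Longrightarrow> cnt T E v t = Suc (cnt T E v (t - 1))"
  by (cases t) auto

lemma first_increase:
  "cnt T E v t < cnt T E v S \<Longrightarrow> \<exists>t'. t < t' \<and> t' \<le> S \<and> active T E v t' \<and> cnt T E v t' = Suc (cnt T E v t)"
proof (induction S)
  case 0
  then show ?case by simp
next
  case (Suc S)
  show ?case
  proof (cases "cnt T E v t < cnt T E v S")
    case True
    then show ?thesis using Suc.IH by (meson le_Suc_eq)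
  next
    case False
    have a: "active T E v (Suc S)" using False Suc.prems by (auto split: if_splits)
    have e: "cnt T E v t = cnt T E v S" using False Suc.prems a by simp
    have "t < Suc S"
    proof (rule ccontr)
      assume "\<not> t < Suc S"
      then have "cnt T E v (Suc S) \<le> cnt T E v t" by (intro cnt_mono) simp
      then show False using Suc.prems by simp
    qed
    then show ?thesis using a e by auto
  qed
qed

lemma active_le: "active T E v t \<Longrightarrow> 1 \<le> t \<Longrightarrow> cnt T E v t \<le> cnt T E v S \<Longrightarrow> t \<le> S"
proof (rule ccontr)
  assume a: "active T E v t" "1 \<le> t" "cnt T E v t \<le> cnt T E v S" "\<not> t \<le> S"
  then have "cnt T E v S \<le> cnt T E v (t - 1)" by (intro cnt_mono) simp
  then show False using a cnt_active'[of T E v t] by simp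
qed

lemma first_firing: "0 < cnt T E v s \<Longrightarrow> \<exists>s0. 1 \<le> s0 \<and> s0 \<le> s \<and> active T E v s0 \<and> cnt T E v (s0 - 1) = 0"
proof (induction s)
  case 0
  then show ?case by simp
next
  case (Suc s)
  show ?case
  proof (cases "0 < cnt T E v s")
    case True
    then show ?thesis using Suc.IH le_Suc_eq by blast
  next
    case False
    then show ?thesis using Suc.prems by (intro exI[of _ "Suc s"]) (auto split: if_splits)
  qed
qed

lemma cnt_const: "s1 \<le> s \<Longrightarrow> (\<forall>t. s1 < t \<and> t \<le> s \<longrightarrow> \<not> active T E v t) \<Longrightarrow> cnt T E v s = cnt T E v s1"
  by (induction s) (auto simp: le_Suc_eq)

lemma last_firing: "active T E u s0 \<Longrightarrow> s0 \<le> s \<Longrightarrow>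
  \<exists>s1. s0 \<le> s1 \<and> s1 \<le> s \<and> active T E u s1 \<and> (\<forall>t. s1 < t \<and> t \<le> s \<longrightarrow> \<not> active T E u t)"
proof (induction s)
  case 0
  then show ?case by auto
next
  case (Suc s)
  show ?case
  proof (cases "active T E u (Suc s)")
    case True
    then show ?thesis using Suc.prems by auto
  next
    case False
    then have "s0 \<le> s" using Suc.prems by (auto simp: le_Suc_eq)
    then obtain s1 where "s0 \<le> s1 \<and> s1 \<le> s \<and> active T E u s1 \<and> (\<forall>t. s1 < t \<and> t \<le> s \<longrightarrow> \<not> active T E u t)"
      using Suc.IH Suc.prems by blast
    then show ?thesis using False by (intro exI[of _ s1]) (auto simp: le_Suc_eq)
  qed
qed

lemma bc2: "broadcast_network V T E \<Longrightarrow> v \<in> V \<Longrightarrow> t1 \<in> {1..T} \<Longrightarrow> t2 \<in> {1..T} \<Longrightarrow> t1 < t2 \<Longrightarrow>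
   active T E v t1 \<Longrightarrow> active T E v t2 \<Longrightarrow> u \<in> nbrs T E v \<Longrightarrow> \<exists>t\<in>{t1..t2-1}. active T E u t"
  unfolding broadcast_network_def by blast

lemma bc1: "broadcast_network V T E \<Longrightarrow> v \<in> V \<Longrightarrow> t \<in> {1..T} \<Longrightarrow>
   (\<forall>u\<in>nbrs T E v. (v, u) \<in> E t) \<or> (\<forall>u\<in>nbrs T E v. (v, u) \<notin> E t)"
  unfolding broadcast_network_def by blast

lemma bn_facts:
  assumes "broadcast_network V T E"
  shows "finite V" "sym (underlying_edges T E)" "underlying_edges T E \<subseteq> V \<times> V"
    "\<And>t. t \<in> {1..T} \<Longrightarrow> E t \<subseteq> underlying_edges T E" "(v, v) \<notin> underlying_edges T E"
    "\<And>t. t \<in> {1..T} \<Longrightarrow> E t \<subseteq> V \<times> V"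
  using assms unfolding broadcast_network_def temporal_graph_def underlying_edges_def by auto

lemma nbrs_iff: "u \<in> nbrs T E v \<longleftrightarrow> (v, u) \<in> underlying_edges T E"
  by (simp add: nbrs_def)


lemma nb_core:
  assumes bn: "broadcast_network V T E" and u: "u \<in> V" and v: "v \<in> nbrs T E u"
  shows "s \<le> T \<Longrightarrow> active T E u s0 \<Longrightarrow> 1 \<le> s0 \<Longrightarrow> s0 \<le> s \<Longrightarrow>
     cnt T E u s + cnt T E v (s0 - 1) \<le> cnt T E u s0 + cnt T E v (s - 1)"
proof (induction s rule: less_induct)
  case (less s)
  show ?case
  proof (cases "s = s0")
    case True
    then show ?thesis by simp
  next
    case False
    then obtain s' where s: "s = Suc s'" and ss: "s0 \<le> s'" using less.prems by (cases s) auto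
    show ?thesis
    proof (cases "active T E u s")
      case False
      have "cnt T E u s = cnt T E u s'" using s False by simp
      moreover have "cnt T E u s' + cnt T E v (s0 - 1) \<le> cnt T E u s0 + cnt T E v (s' - 1)"
        using less.IH[of s'] less.prems ss s by simp
      moreover have "cnt T E v (s' - 1) \<le> cnt T E v (s - 1)" using s by (intro cnt_mono) simp
      ultimately show ?thesis by simp
    next
      case True
      obtain s1 where s1: "s0 \<le> s1" "s1 \<le> s'" "active T E u s1"
          "\<forall>t. s1 < t \<and> t \<le> s' \<longrightarrow> \<not> active T E u t"
        using last_firing[OF less.prems(2) ss] by blast
      have c1: "cnt T E u s' = cnt T E u s1" by (rule cnt_const[OF s1(2) s1(4)])
      have cs: "cnt T E u s = Suc (cnt T E u s')" using True s by simp
      have i1: "s1 \<in> {1..T}" using s1(1,2) less.prems(1,3) s by simp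
      have i2: "s \<in> {1..T}" using less.prems(1) s by simp
      have i3: "s1 < s" using s1(2) s by simp
      obtain t where t: "t \<in> {s1..s-1}" "active T E v t"
        using bc2[OF bn u i1 i2 i3 s1(3) True v] by blast
      have "cnt T E v (s1 - 1) \<le> cnt T E v (t - 1)" using t by (intro cnt_mono) auto
      moreover have "cnt T E v t = Suc (cnt T E v (t - 1))" using t s1 less.prems
        by (intro cnt_active') auto
      moreover have "cnt T E v t \<le> cnt T E v (s - 1)" using t by (intro cnt_mono) auto
      moreover have "cnt T E u s1 + cnt T E v (s0 - 1) \<le> cnt T E u s0 + cnt T E v (s1 - 1)"
        using less.IH[of s1] less.prems s1 s by simp
      ultimately show ?thesis using c1 cs by simp
    qed
  qed
qed

lemma nb:
  assumes bn: "broadcast_network V T E" and u: "u \<in> V" and v: "v \<in> nbrs T E u" and sT: "s \<le> T"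
  shows "cnt T E u s \<le> Suc (cnt T E v (s - 1))"
proof (cases "cnt T E u s = 0")
  case True
  then show ?thesis by simp
next
  case False
  then obtain s0 where s0: "1 \<le> s0" "s0 \<le> s" "active T E u s0" "cnt T E u (s0 - 1) = 0"
    using first_firing[of T E u s] by auto
  have "cnt T E u s0 = 1" using s0 cnt_active'[of T E u s0] by simp
  then show ?thesis using nb_core[OF bn u v sT s0(3) s0(1) s0(2)] by simp
qed

lemma path_cnt:
  assumes bn: "broadcast_network V T E"
  shows "(v, x) \<in> underlying_edges T E ^^ k \<Longrightarrow> v \<in> V \<Longrightarrow> s \<le> T \<Longrightarrow> cnt T E x s \<le> cnt T E v s + k"
proof (induction k arbitrary: v)
  case 0
  then show ?case by simp
next
  case (Suc k)
  then obtain w where w: "(v, w) \<in> underlying_edges T E" "(w, x) \<in> underlying_edges T E ^^ k"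
    using relpow_Suc_D2 by metis
  have wV: "w \<in> V" using w bn_facts(3)[OF bn] by auto
  have "(w, v) \<in> underlying_edges T E" using w bn_facts(2)[OF bn] by (auto dest: symD)
  then have "v \<in> nbrs T E w" by (simp add: nbrs_iff)
  then have "cnt T E w s \<le> Suc (cnt T E v (s - 1))" using nb[OF bn wV _ Suc.prems(3)] by simp
  moreover have "cnt T E v (s - 1) \<le> cnt T E v s" by (intro cnt_mono) simp
  moreover have "cnt T E x s \<le> cnt T E w s + k" using Suc.IH[OF w(2) wV Suc.prems(3)] .
  ultimately show ?case by simp
qed

lemma x_fires:
  assumes bn: "broadcast_network V T E" and ac: "always_connected V T E" and cV: "card V \<ge> 2"
    and xV: "x \<in> V" and t1: "1 \<le> t" and tT: "t + card (nbrs T E x) \<le> T"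
  shows "\<exists>s\<in>{t..t + card (nbrs T E x)}. active T E x s"
proof (rule ccontr)
  assume na: "\<not> (\<exists>s\<in>{t..t + card (nbrs T E x)}. active T E x s)"
  let ?d = "card (nbrs T E x)"
  let ?U = "underlying_edges T E"
  have fin: "finite (nbrs T E x)"
  proof -
    have "nbrs T E x \<subseteq> V" using bn_facts(3)[OF bn] by (auto simp: nbrs_iff)
    then show ?thesis using bn_facts(1)[OF bn] finite_subset by blast
  qed
  have "\<exists>z\<in>V. z \<noteq> x"
  proof (rule ccontr)
    assume "\<not> (\<exists>z\<in>V. z \<noteq> x)"
    then have "V \<subseteq> {x}" by auto
    then have "card V \<le> 1" using card_mono[of "{x}" V] by simp
    then show False using cV by simp
  qed
  then obtain z where z: "z \<in> V" "z \<noteq> x" by blast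
  have ex: "\<forall>s\<in>{t..t+?d}. \<exists>y\<in>nbrs T E x. active T E y s"
  proof
    fix s assume s: "s \<in> {t..t+?d}"
    have s1T: "s \<in> {1..T}" using s t1 tT by auto
    have "(x, z) \<in> (E s \<union> (E s)\<inverse>)\<^sup>*" using ac s1T xV z unfolding always_connected_def static_connected_def by blast
    then obtain y where y: "(x, y) \<in> E s \<union> (E s)\<inverse>" using z(2) by (cases rule: converse_rtranclE) auto
    show "\<exists>y\<in>nbrs T E x. active T E y s"
    proof (cases "(x, y) \<in> E s")
      case True
      then have "y \<in> nbrs T E x" using bn_facts(4)[OF bn s1T] by (auto simp: nbrs_iff)
      then have "active T E x s" using bc1[OF bn xV s1T] True unfolding active_def by blast
      then show ?thesis using na s by blast
    next
      case False
      then have yx: "(y, x) \<in> E s" using y by auto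
      have yV: "y \<in> V" using yx bn_facts(6)[OF bn s1T] by auto
      have xy: "x \<in> nbrs T E y" using yx bn_facts(4)[OF bn s1T] by (auto simp: nbrs_iff)
      have "active T E y s" using bc1[OF bn yV s1T] xy yx unfolding active_def by blast
      moreover have "y \<in> nbrs T E x" using xy bn_facts(2)[OF bn] by (auto simp: nbrs_iff dest: symD)
      ultimately show ?thesis by blast
    qed
  qed
  then obtain f where f: "\<forall>s\<in>{t..t+?d}. f s \<in> nbrs T E x \<and> active T E (f s) s" by metis
  have "\<not> inj_on f {t..t+?d}"
  proof
    assume "inj_on f {t..t+?d}"
    then have "card {t..t+?d} \<le> card (nbrs T E x)" using f fin by (intro card_inj_on_le) auto
    then show False by simp
  qed
  then obtain s1 s2 where s12: "s1 \<in> {t..t+?d}" "s2 \<in> {t..t+?d}" "s1 < s2" "f s1 = f s2"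
    unfolding inj_on_def by (metis linorder_neqE_nat)
  let ?y = "f s1"
  have yV: "?y \<in> V" using f s12 bn_facts(3)[OF bn] by (auto simp: nbrs_iff)
  have "x \<in> nbrs T E ?y" using f s12 bn_facts(2)[OF bn] by (auto simp: nbrs_iff dest: symD)
  then obtain t' where "t' \<in> {s1..s2-1}" "active T E x t'"
    using bc2[OF bn yV, of s1 s2 x] s12 f t1 tT by fastforce
  then show False using na s12 by auto
qed


lemma x_cnt:
  assumes bn: "broadcast_network V T E" and ac: "always_connected V T E" and cV: "card V \<ge> 2"
    and xV: "x \<in> V"
  shows "(card (nbrs T E x) + 1) * q \<le> T \<Longrightarrow> q \<le> cnt T E x ((card (nbrs T E x) + 1) * q)"
proof (induction q)
  case 0
  then show ?case by simp
next
  case (Suc q)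
  let ?D = "card (nbrs T E x) + 1"
  have "1 \<le> ?D * q + 1" by simp
  moreover have "?D * q + 1 + card (nbrs T E x) \<le> T" using Suc.prems by simp
  ultimately obtain s where s: "s \<in> {?D * q + 1 .. ?D * q + 1 + card (nbrs T E x)}" "active T E x s"
    using x_fires[OF bn ac cV xV] by blast
  have "q \<le> cnt T E x (?D * q)" using Suc.IH Suc.prems by simp
  also have "cnt T E x (?D * q) \<le> cnt T E x (s - 1)"
  proof (rule cnt_mono)
    show "?D * q \<le> s - 1" using s(1) by auto
  qed
  also have "cnt T E x (s - 1) < cnt T E x s" using cnt_active'[OF s(2)] s by simp
  also have "cnt T E x s \<le> cnt T E x (?D * Suc q)" using s by (intro cnt_mono) simp
  finally show ?case by simp
qed

lemma v_cnt:
  assumes bn: "broadcast_network V T E" and ac: "always_connected V T E" and cV: "card V \<ge> 2"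
    and xV: "x \<in> V" and p: "(v, x) \<in> underlying_edges T E ^^ k" and vV: "v \<in> V"
    and QT: "(card (nbrs T E x) + 1) * Q \<le> T"
  shows "Q \<le> cnt T E v ((card (nbrs T E x) + 1) * Q) + k"
  using x_cnt[OF bn ac cV xV QT] path_cnt[OF bn p vV QT] by simp

fun uwalk :: "('a \<times> 'a) set \<Rightarrow> 'a list \<Rightarrow> bool" where
  "uwalk R [] = True"
| "uwalk R [a] = True"
| "uwalk R (a # b # xs) = ((a, b) \<in> R \<and> uwalk R (b # xs))"

fun edges :: "'a list \<Rightarrow> ('a \<times> 'a) list" where
  "edges [] = []"
| "edges [a] = []"
| "edges (a # b # xs) = (a, b) # edges (b # xs)"

lemma uwalk_append: "uwalk R (xs @ y # ys) \<longleftrightarrow> uwalk R (xs @ [y]) \<and> uwalk R (y # ys)"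
proof (induction xs)
  case Nil
  then show ?case by simp
next
  case (Cons a xs)
  then show ?case by (cases xs) auto
qed

lemma edges_snoc: "edges (xs @ [y, z]) = edges (xs @ [y]) @ [(y, z)]"
proof (induction xs)
  case Nil
  then show ?case by simp
next
  case (Cons a xs)
  then show ?case by (cases xs) auto
qed

lemma edges_cover: "2 \<le> length q \<Longrightarrow> v \<in> set q \<Longrightarrow> \<exists>e\<in>set (edges q). v = fst e \<or> v = snd e"
proof (induction q rule: edges.induct)
  case (3 a b xs)
  show ?case
  proof (cases "v = a")
    case True
    then show ?thesis by simp
  next
    case False
    show ?thesis
    proof (cases xs)
      case Nil
      then show ?thesis using False 3 by simp
    next
      case (Cons c ys)
      then show ?thesis using False 3 by auto
    qed
  qed
qed auto

lemma tw_snoc: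
  assumes "temporal_walk T E W" "snd (fst (last W)) = fst (fst e)" "snd (last W) < snd e"
    "snd e \<in> {1..T}" "fst e \<in> E (snd e)"
  shows "temporal_walk T E (W @ [e])"
proof -
  have ne: "W \<noteq> []" using assms(1) by (simp add: temporal_walk_def)
  have lw: "last W = W ! (length W - 1)" using ne by (simp add: last_conv_nth)
  have A: "\<forall>i<length (W @ [e]). snd ((W @ [e]) ! i) \<in> {1..T} \<and> fst ((W @ [e]) ! i) \<in> E (snd ((W @ [e]) ! i))"
  proof (intro allI impI)
    fix i assume i: "i < length (W @ [e])"
    show "snd ((W @ [e]) ! i) \<in> {1..T} \<and> fst ((W @ [e]) ! i) \<in> E (snd ((W @ [e]) ! i))"
    proof (cases "i < length W")
      case True
      then show ?thesis using assms(1) by (simp add: nth_append temporal_walk_def)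
    next
      case False
      then have "i = length W" using i by simp
      then show ?thesis using assms(4,5) by simp
    qed
  qed
  have B: "\<forall>i. Suc i < length (W @ [e]) \<longrightarrow> snd (fst ((W @ [e]) ! i)) = fst (fst ((W @ [e]) ! Suc i)) \<and> snd ((W @ [e]) ! i) < snd ((W @ [e]) ! Suc i)"
  proof (intro allI impI)
    fix i assume i: "Suc i < length (W @ [e])"
    show "snd (fst ((W @ [e]) ! i)) = fst (fst ((W @ [e]) ! Suc i)) \<and> snd ((W @ [e]) ! i) < snd ((W @ [e]) ! Suc i)"
    proof (cases "Suc i < length W")
      case True
      then show ?thesis using assms(1) by (simp add: nth_append temporal_walk_def)
    next
      case False
      then have "Suc i = length W" using i by simp
      then have "i = length W - 1" by simp
      then have "(W @ [e]) ! i = last W" "(W @ [e]) ! Suc i = e" using lw \<open>Suc i = length W\<close>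
        by (auto simp: nth_append)
      then show ?thesis using assms(2,3) by simp
    qed
  qed
  show ?thesis unfolding temporal_walk_def using A B by simp
qed


declare cnt.simps(2)[simp del]

lemma G:
  assumes bn: "broadcast_network V T E" and ac: "always_connected V T E" and cV: "card V \<ge> 2"
    and xV: "x \<in> V" and KT: "(card (nbrs T E x) + 1) * K \<le> T"
  shows "uwalk (underlying_edges T E) (ys @ [a, b]) \<Longrightarrow> set (ys @ [a, b]) \<subseteq> V \<Longrightarrow>
    (a, x) \<in> underlying_edges T E ^^ k \<Longrightarrow> length ys + 1 + k \<le> K \<Longrightarrow>
    \<exists>W t. temporal_walk T E W \<and> map fst W = edges (ys @ [a, b]) \<and> snd (last W) = t \<and>
      active T E a t \<and> 1 \<le> t \<and> cnt T E a t \<le> length ys + 1 \<and>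
      t \<le> (card (nbrs T E x) + 1) * (length ys + 1 + k)"
proof (induction ys arbitrary: a b k rule: rev_induct)
  case Nil
  let ?D = "card (nbrs T E x) + 1"
  have QT: "?D * (1 + k) \<le> T" using KT Nil.prems(4) by (metis add.commute le_trans list.size(3) add_0 mult_le_mono2)
  have aV: "a \<in> V" using Nil.prems(2) by simp
  have "1 + k \<le> cnt T E a (?D * (1 + k)) + k" using v_cnt[OF bn ac cV xV Nil.prems(3) aV QT] .
  then have c0: "cnt T E a 0 < cnt T E a (?D * (1 + k))" unfolding cnt.simps(1) by linarith
  then obtain t' where t': "0 < t'" "t' \<le> ?D * (1 + k)" "active T E a t'" "cnt T E a t' = 1"
    using first_increase[OF c0] by auto
  have ab: "(a, b) \<in> underlying_edges T E" using Nil.prems(1) by simp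
  have t'T: "t' \<in> {1..T}" using t' QT by simp
  have "(a, b) \<in> E t'" using t'(3) ab unfolding active_def by (simp add: nbrs_iff)
  then have "temporal_walk T E [((a, b), t')]" using t'T by (simp add: temporal_walk_def)
  then show ?case using t' by (intro exI[of _ "[((a, b), t')]"] exI[of _ t']) simp
next
  case (snoc y ys)
  let ?D = "card (nbrs T E x) + 1"
  let ?U = "underlying_edges T E"
  have u1: "uwalk ?U (ys @ [y, a])" and yab: "(y, a) \<in> ?U" and ab: "(a, b) \<in> ?U"
    using snoc.prems(1) uwalk_append[of ?U "ys @ [y]" a "[b]"] uwalk_append[of ?U ys y "[a]"] by auto
  have yx: "(y, x) \<in> ?U ^^ Suc k" using relpow_Suc_I2[OF yab snoc.prems(3)] .
  obtain W t where W: "temporal_walk T E W" "map fst W = edges (ys @ [y, a])" "snd (last W) = t"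
      "active T E y t" "1 \<le> t" "cnt T E y t \<le> length ys + 1" "t \<le> ?D * (length ys + 1 + Suc k)"
    using snoc.IH[OF u1 _ yx] snoc.prems(2,4) by auto
  have yV: "y \<in> V" and aV: "a \<in> V" using snoc.prems(2) by auto
  let ?Q = "length (ys @ [y]) + 1 + k"
  have QT: "?D * ?Q \<le> T" using KT snoc.prems(4) by (meson le_trans mult_le_mono2)
  have tT: "t \<le> T" using W(7) QT by simp
  have "(a, y) \<in> ?U" using yab bn_facts(2)[OF bn] by (auto dest: symD)
  then have "y \<in> nbrs T E a" by (simp add: nbrs_iff)
  then have "cnt T E a t \<le> Suc (cnt T E y (t - 1))" using nb[OF bn aV _ tT] by simp
  also have "\<dots> = cnt T E y t" using cnt_active'[OF W(4,5)] by simp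
  finally have cat: "cnt T E a t \<le> length ys + 1" using W(6) by simp
  have "?Q \<le> cnt T E a (?D * ?Q) + k" using v_cnt[OF bn ac cV xV snoc.prems(3) aV QT] .
  then have "cnt T E a t < cnt T E a (?D * ?Q)" using cat by simp
  then obtain t' where t': "t < t'" "t' \<le> ?D * ?Q" "active T E a t'" "cnt T E a t' = Suc (cnt T E a t)"
    using first_increase[of T E a t] by auto
  have t'T: "t' \<in> {1..T}" using t' QT W(5) by simp
  have abE: "(a, b) \<in> E t'" using t'(3) ab unfolding active_def by (simp add: nbrs_iff)
  have Wne: "W \<noteq> []" using W(1) by (simp add: temporal_walk_def)
  have "last (map fst W) = (y, a)" using W(2) edges_snoc[of ys y a] by simp
  then have lW: "snd (fst (last W)) = a" using Wne by (simp add: last_map)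
  have tw: "temporal_walk T E (W @ [((a, b), t')])"
    using tw_snoc[OF W(1), of "((a, b), t')"] lW W(3) t' t'T abE by simp
  have "map fst (W @ [((a, b), t')]) = edges ((ys @ [y]) @ [a, b])"
    using W(2) edges_snoc[of "ys @ [y]" a b] by simp
  then show ?case using tw t' cat by (intro exI[of _ "W @ [((a, b), t')]"] exI[of _ t']) simp
qed


lemma leaving: "(u, v) \<in> R\<^sup>* \<Longrightarrow> u \<in> S \<Longrightarrow> v \<notin> S \<Longrightarrow> \<exists>w z. (w, z) \<in> R \<and> w \<in> S \<and> z \<notin> S"
  by (induction rule: rtrancl_induct) auto

lemma C_step:
  assumes fin: "finite V" and sU: "sym U" and UV: "U \<subseteq> V \<times> V"
    and conn: "\<forall>u\<in>V. \<forall>v\<in>V. (u, v) \<in> U\<^sup>*"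
    and c2: "2 \<le> c" and cV: "c < card V"
    and p: "uwalk U (pre @ [a, b])" "set (pre @ [a, b]) \<subseteq> V" "card (set (pre @ [a, b])) = c"
      "(a, x) \<in> U ^^ k" "length pre + 1 + k \<le> 2 * c - 3"
  shows "\<exists>pre a b k. uwalk U (pre @ [a, b]) \<and> set (pre @ [a, b]) \<subseteq> V \<and>
      card (set (pre @ [a, b])) = Suc c \<and> (a, x) \<in> U ^^ k \<and> length pre + 1 + k \<le> 2 * Suc c - 3"
proof -
  let ?P = "set (pre @ [a, b])"
  have "?P \<noteq> V" using p(3) cV by auto
  then obtain z0 where z0: "z0 \<in> V" "z0 \<notin> ?P" using p(2) by auto
  have aV: "a \<in> V" using p(2) by simp
  obtain w z where wz: "(w, z) \<in> U" "w \<in> ?P" "z \<notin> ?P"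
    using leaving[OF conn[rule_format, OF aV z0(1)] _ z0(2)] by auto
  have zV: "z \<in> V" using wz UV by auto
  have zw: "(z, w) \<in> U" using wz sU by (auto dest: symD)
  have cardz: "card (insert z ?P) = Suc c" using wz(3) p(3) by simp
  have ar: "2 * Suc c - 3 = 2 * c - 3 + 2" using c2 by simp
  have pw: "uwalk U (pre @ [a]) \<and> uwalk U [a, b]" using p(1) uwalk_append[of U pre a "[b]"] by simp
  consider "w \<in> set pre" | "w = a" | "w = b" using wz(2) by auto
  then show ?thesis
  proof cases
    case 1
    then obtain xs ys where pre: "pre = xs @ w # ys" by (meson split_list)
    have u: "uwalk U (xs @ [w]) \<and> uwalk U (w # ys @ [a, b])"
      using p(1) pre uwalk_append[of U xs w "ys @ [a, b]"] by simp
    have "uwalk U ((xs @ w # z # w # ys) @ [a, b])"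
      using u wz(1) zw uwalk_append[of U xs w "z # w # ys @ [a, b]"] by simp
    moreover have "set ((xs @ w # z # w # ys) @ [a, b]) = insert z ?P" using pre by auto
    ultimately show ?thesis using p zV cardz ar pre
      by (intro exI[of _ "xs @ w # z # w # ys"] exI[of _ a] exI[of _ b] exI[of _ k]) auto
  next
    case 2
    have "uwalk U ((pre @ [a, z]) @ [a, b])"
      using pw wz(1) zw 2 uwalk_append[of U pre a "[z, a, b]"] by simp
    moreover have "set ((pre @ [a, z]) @ [a, b]) = insert z ?P" by auto
    ultimately show ?thesis using p zV cardz ar
      by (intro exI[of _ "pre @ [a, z]"] exI[of _ a] exI[of _ b] exI[of _ k]) auto
  next
    case 3
    have "uwalk U ((pre @ [a]) @ [b, z])"
      using pw wz(1) 3 uwalk_append[of U pre a "[b, z]"] by simp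
    moreover have "set ((pre @ [a]) @ [b, z]) = insert z ?P" by auto
    moreover have "(b, x) \<in> U ^^ Suc k"
    proof -
      have "(b, a) \<in> U" using pw sU by (auto dest: symD)
      then show ?thesis using relpow_Suc_I2 p(4) by metis
    qed
    ultimately show ?thesis using p zV cardz ar
      by (intro exI[of _ "pre @ [a]"] exI[of _ b] exI[of _ z] exI[of _ "Suc k"]) auto
  qed
qed

lemma C:
  assumes fin: "finite V" and sU: "sym U" and UV: "U \<subseteq> V \<times> V"
    and conn: "\<forall>u\<in>V. \<forall>v\<in>V. (u, v) \<in> U\<^sup>*" and irr: "\<forall>v. (v, v) \<notin> U"
    and cV: "2 \<le> card V" and xV: "x \<in> V"
  shows "\<exists>pre a b k. uwalk U (pre @ [a, b]) \<and> set (pre @ [a, b]) = V \<and>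
      (a, x) \<in> U ^^ k \<and> length pre + 1 + k \<le> 2 * card V - 3"
proof -
  have main: "2 \<le> c \<Longrightarrow> c \<le> card V \<Longrightarrow> \<exists>pre a b k. uwalk U (pre @ [a, b]) \<and> set (pre @ [a, b]) \<subseteq> V \<and>
      card (set (pre @ [a, b])) = c \<and> (a, x) \<in> U ^^ k \<and> length pre + 1 + k \<le> 2 * c - 3" for c
  proof (induction c)
    case 0
    then show ?case by simp
  next
    case (Suc c)
    show ?case
    proof (cases "2 \<le> c")
      case True
      then obtain pre a b k where "uwalk U (pre @ [a, b])" "set (pre @ [a, b]) \<subseteq> V"
        "card (set (pre @ [a, b])) = c" "(a, x) \<in> U ^^ k" "length pre + 1 + k \<le> 2 * c - 3"
        using Suc by auto
      then show ?thesis using C_step[OF fin sU UV conn True] Suc.prems by simp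
    next
      case False
      then have c2: "Suc c = 2" using Suc.prems by simp
      have "\<exists>z\<in>V. z \<noteq> x"
      proof (rule ccontr)
        assume "\<not> (\<exists>z\<in>V. z \<noteq> x)"
        then have "V \<subseteq> {x}" by auto
        then have "card V \<le> 1" using card_mono[of "{x}" V] by simp
        then show False using cV by simp
      qed
      then obtain z where z: "z \<in> V" "z \<noteq> x" by blast
      have "(x, z) \<in> U\<^sup>*" using conn xV z by blast
      then obtain y where y: "(x, y) \<in> U" using z(2) by (cases rule: converse_rtranclE) auto
      have "y \<noteq> x" using y irr by auto
      moreover have "y \<in> V" using y UV by auto
      ultimately show ?thesis using c2 xV y
        by (intro exI[of _ "[]"] exI[of _ x] exI[of _ y] exI[of _ 0]) auto
    qed
  qed
  obtain pre a b k where p: "uwalk U (pre @ [a, b])" "set (pre @ [a, b]) \<subseteq> V"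
      "card (set (pre @ [a, b])) = card V" "(a, x) \<in> U ^^ k" "length pre + 1 + k \<le> 2 * card V - 3"
    using main[OF cV order.refl] by blast
  have "set (pre @ [a, b]) = V" using p(2,3) fin by (simp add: card_subset_eq)
  then show ?thesis using p by blast
qed


theorem theorem17:
  fixes V :: "'a set" and T :: nat and E :: "nat \<Rightarrow> ('a \<times> 'a) set"
  assumes "broadcast_network V T E"
    and "always_connected V T E"
    and "card V \<ge> 2"
    and "T \<ge> (Min ((\<lambda>v. card (nbrs T E v)) ` V) + 1) * (2 * card V - 3)"
  shows "\<exists>W. temporal_walk T E W \<and> explores V W \<and>
           walk_length W \<le> (Min ((\<lambda>v. card (nbrs T E v)) ` V) + 1) * (2 * card V - 3)"
proof -
  note bn = assms(1) and ac = assms(2) and cV = assms(3)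
  let ?U = "underlying_edges T E"
  have fin: "finite V" using bn_facts(1)[OF bn] .
  have Vne: "V \<noteq> {}" using cV by auto
  have "Min ((\<lambda>v. card (nbrs T E v)) ` V) \<in> (\<lambda>v. card (nbrs T E v)) ` V"
    using fin Vne by (intro Min_in) auto
  then obtain x where xV: "x \<in> V" and xd: "card (nbrs T E x) = Min ((\<lambda>v. card (nbrs T E v)) ` V)"
    by (metis (no_types, lifting) imageE)
  let ?D = "card (nbrs T E x) + 1"
  let ?K = "2 * card V - 3"
  have KT: "?D * ?K \<le> T" using assms(4) xd by simp
  have K1: "1 \<le> ?K" using cV by simp
  have "1 \<le> ?D * ?K" using K1 by simp
  then have T1: "1 \<le> T" using KT by linarith
  have conn: "\<forall>u\<in>V. \<forall>v\<in>V. (u, v) \<in> ?U\<^sup>*"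
  proof (intro ballI)
    fix u v assume uv: "u \<in> V" "v \<in> V"
    have 1: "(1::nat) \<in> {1..T}" using T1 by simp
    have "(u, v) \<in> (E 1 \<union> (E 1)\<inverse>)\<^sup>*" using ac uv 1 unfolding always_connected_def static_connected_def by blast
    moreover have "E 1 \<union> (E 1)\<inverse> \<subseteq> ?U" using bn_facts(4)[OF bn 1] bn_facts(2)[OF bn] by (auto dest: symD)
    ultimately show "(u, v) \<in> ?U\<^sup>*" using rtrancl_mono by blast
  qed
  obtain pre a b k where p: "uwalk ?U (pre @ [a, b])" "set (pre @ [a, b]) = V"
      "(a, x) \<in> ?U ^^ k" "length pre + 1 + k \<le> ?K"
    using C[OF fin bn_facts(2)[OF bn] bn_facts(3)[OF bn] conn _ cV xV] bn_facts(5)[OF bn] by blast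
  obtain W t where W: "temporal_walk T E W" "map fst W = edges (pre @ [a, b])" "snd (last W) = t"
      "t \<le> ?D * (length pre + 1 + k)"
    using G[OF bn ac cV xV KT p(1) _ p(3,4)] p(2) by blast
  have "t \<le> ?D * ?K" using W(4) p(4) by (meson le_trans mult_le_mono2)
  then have wl: "walk_length W \<le> (Min ((\<lambda>v. card (nbrs T E v)) ` V) + 1) * (2 * card V - 3)"
    using W(3) xd by (simp add: walk_length_def)
  have ex: "explores V W"
    unfolding explores_def
  proof
    fix v assume "v \<in> V"
    then obtain e where e: "e \<in> set (edges (pre @ [a, b]))" "v = fst e \<or> v = snd e"
      using edges_cover[of "pre @ [a, b]" v] p(2) by auto
    then have "e \<in> fst ` set W" using W(2) by (metis list.set_map)
    then show "\<exists>e\<in>set W. v = fst (fst e) \<or> v = snd (fst e)" using e(2) by auto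
  qed
  show ?thesis using W(1) ex wl by blast
qed

end
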